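(* Let $\mathbb{C}$ be a pointed protomodular category. Every normal subobject (normal monomorphism) of a proto-complete object of $\mathbb{C}$ is a characteristic monomorphism.
   Context: A pointed category with finite limits is protomodular if the split short five lemma holds. A normal monomorphism is a kernel of some morphism; a protosplit monomorphism is a kernel of a split epimorphism. An object $X$ is proto-complete if every protosplit monomorphism with domain $X$ is a split monomorphism. A monomorphism $m:S\to Y$ is Bourn-normal if there is an equivalence relation $(R,r_1,r_2)$ on $Y$ and $\tilde m:S\times S\to R$ with $r_1\tilde m=m\pi_1$, $r_2\tilde m=m\pi_2$ and the square $r_1\tilde m=m\pi_1$ a pullback. A morphism $u:S\to X$ is a characteristic monomorphism if for every Bourn-normal monomorphism $n:X\to Y$ the composite $nu$ is a Bourn-normal monomorphism. *)

theory Defs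
  imports Main
begin

record ('o, 'a) category =
  Obj  :: "'o set"
  Arr  :: "'a set"
  Dom  :: "'a \<Rightarrow> 'o"
  Cod  :: "'a \<Rightarrow> 'o"
  Id   :: "'o \<Rightarrow> 'a"
  Comp :: "'a \<Rightarrow> 'a \<Rightarrow> 'a"   (* Comp C g f = g \<circ> f, defined when Cod f = Dom g *)

definition hom :: "('o,'a) category \<Rightarrow> 'a \<Rightarrow> 'o \<Rightarrow> 'o \<Rightarrow> bool" where
  "hom C f X Y \<longleftrightarrow> f \<in> Arr C \<and> Dom C f = X \<and> Cod C f = Y"

definition is_category :: "('o,'a) category \<Rightarrow> bool" where
  "is_category C \<longleftrightarrow>
     (\<forall>f \<in> Arr C. Dom C f \<in> Obj C \<and> Cod C f \<in> Obj C) \<and>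
     (\<forall>X \<in> Obj C. hom C (Id C X) X X) \<and>
     (\<forall>f g. f \<in> Arr C \<and> g \<in> Arr C \<and> Cod C f = Dom C g \<longrightarrow>
            hom C (Comp C g f) (Dom C f) (Cod C g)) \<and>
     (\<forall>f \<in> Arr C. Comp C f (Id C (Dom C f)) = f \<and> Comp C (Id C (Cod C f)) f = f) \<and>
     (\<forall>f g h. f \<in> Arr C \<and> g \<in> Arr C \<and> h \<in> Arr C \<and> Cod C f = Dom C g \<and> Cod C g = Dom C h
            \<longrightarrow> Comp C h (Comp C g f) = Comp C (Comp C h g) f)"

definition mono :: "('o,'a) category \<Rightarrow> 'a \<Rightarrow> bool" where
  "mono C m \<longleftrightarrow> m \<in> Arr C \<and>
     (\<forall>x y. x \<in> Arr C \<and> y \<in> Arr C \<and> Cod C x = Dom C m \<and> Cod C y = Dom C m \<and>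
            Dom C x = Dom C y \<and> Comp C m x = Comp C m y \<longrightarrow> x = y)"

definition split_mono :: "('o,'a) category \<Rightarrow> 'a \<Rightarrow> bool" where
  "split_mono C m \<longleftrightarrow> m \<in> Arr C \<and>
     (\<exists>r. hom C r (Cod C m) (Dom C m) \<and> Comp C r m = Id C (Dom C m))"

definition split_epi :: "('o,'a) category \<Rightarrow> 'a \<Rightarrow> bool" where
  "split_epi C p \<longleftrightarrow> p \<in> Arr C \<and>
     (\<exists>s. hom C s (Cod C p) (Dom C p) \<and> Comp C p s = Id C (Cod C p))"

definition iso :: "('o,'a) category \<Rightarrow> 'a \<Rightarrow> bool" where
  "iso C f \<longleftrightarrow> f \<in> Arr C \<and>
     (\<exists>g. hom C g (Cod C f) (Dom C f) \<and> Comp C g f = Id C (Dom C f) \<and> Comp C f g = Id C (Cod C f))"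

definition initial_obj :: "('o,'a) category \<Rightarrow> 'o \<Rightarrow> bool" where
  "initial_obj C Z \<longleftrightarrow> Z \<in> Obj C \<and> (\<forall>X \<in> Obj C. \<exists>!f. hom C f Z X)"

definition terminal_obj :: "('o,'a) category \<Rightarrow> 'o \<Rightarrow> bool" where
  "terminal_obj C T \<longleftrightarrow> T \<in> Obj C \<and> (\<forall>X \<in> Obj C. \<exists>!f. hom C f X T)"

definition zero_obj :: "('o,'a) category \<Rightarrow> 'o \<Rightarrow> bool" where
  "zero_obj C Z \<longleftrightarrow> initial_obj C Z \<and> terminal_obj C Z"

definition pointed :: "('o,'a) category \<Rightarrow> bool" where
  "pointed C \<longleftrightarrow> (\<exists>Z. zero_obj C Z)"

definition zero_arr :: "('o,'a) category \<Rightarrow> 'a \<Rightarrow> bool" where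
  "zero_arr C f \<longleftrightarrow> f \<in> Arr C \<and>
     (\<exists>Z g h. zero_obj C Z \<and> hom C h (Dom C f) Z \<and> hom C g Z (Cod C f) \<and> f = Comp C g h)"

definition is_pullback :: "('o,'a) category \<Rightarrow> 'a \<Rightarrow> 'a \<Rightarrow> 'a \<Rightarrow> 'a \<Rightarrow> bool" where
  "is_pullback C f g p q \<longleftrightarrow>
     f \<in> Arr C \<and> g \<in> Arr C \<and> Cod C f = Cod C g \<and>
     hom C p (Dom C p) (Dom C f) \<and> hom C q (Dom C p) (Dom C g) \<and>
     Comp C f p = Comp C g q \<and>
     (\<forall>T a b. hom C a T (Dom C f) \<and> hom C b T (Dom C g) \<and> Comp C f a = Comp C g b \<longrightarrow>
        (\<exists>!h. hom C h T (Dom C p) \<and> Comp C p h = a \<and> Comp C q h = b))"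

definition has_pullbacks :: "('o,'a) category \<Rightarrow> bool" where
  "has_pullbacks C \<longleftrightarrow>
     (\<forall>f g. f \<in> Arr C \<and> g \<in> Arr C \<and> Cod C f = Cod C g \<longrightarrow> (\<exists>p q. is_pullback C f g p q))"

definition has_finite_limits :: "('o,'a) category \<Rightarrow> bool" where
  "has_finite_limits C \<longleftrightarrow> (\<exists>T. terminal_obj C T) \<and> has_pullbacks C"

definition is_product :: "('o,'a) category \<Rightarrow> 'o \<Rightarrow> 'a \<Rightarrow> 'a \<Rightarrow> 'o \<Rightarrow> 'o \<Rightarrow> bool" where
  "is_product C P p1 p2 A B \<longleftrightarrow>
     hom C p1 P A \<and> hom C p2 P B \<and>
     (\<forall>T a b. hom C a T A \<and> hom C b T B \<longrightarrow>
        (\<exists>!h. hom C h T P \<and> Comp C p1 h = a \<and> Comp C p2 h = b))"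

definition is_kernel :: "('o,'a) category \<Rightarrow> 'a \<Rightarrow> 'a \<Rightarrow> bool" where
  "is_kernel C k f \<longleftrightarrow>
     k \<in> Arr C \<and> f \<in> Arr C \<and> Cod C k = Dom C f \<and> zero_arr C (Comp C f k) \<and>
     (\<forall>T x. hom C x T (Dom C f) \<and> zero_arr C (Comp C f x) \<longrightarrow>
        (\<exists>!h. hom C h T (Dom C k) \<and> Comp C k h = x))"

text \<open>Split short five lemma: given split extensions
  K --k--> A --p--> B (section s) and K' --k'--> A' --p'--> B' (section s'),
  with k, k' kernels of p, p', and a morphism (u, v, w) between them
  (v k = k' u, p' v = w p, v s = s' w), if u and w are isomorphisms, so is v.\<close>
definition protomodular :: "('o,'a) category \<Rightarrow> bool" where
  "protomodular C \<longleftrightarrow>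
     (\<forall>k p s k' p' s' u v w.
        is_kernel C k p \<and> hom C s (Cod C p) (Dom C p) \<and> Comp C p s = Id C (Cod C p) \<and>
        is_kernel C k' p' \<and> hom C s' (Cod C p') (Dom C p') \<and> Comp C p' s' = Id C (Cod C p') \<and>
        hom C u (Dom C k) (Dom C k') \<and> hom C v (Dom C p) (Dom C p') \<and> hom C w (Cod C p) (Cod C p') \<and>
        Comp C v k = Comp C k' u \<and> Comp C p' v = Comp C w p \<and> Comp C v s = Comp C s' w \<and>
        iso C u \<and> iso C w
        \<longrightarrow> iso C v)"

definition normal_mono :: "('o,'a) category \<Rightarrow> 'a \<Rightarrow> bool" where
  "normal_mono C m \<longleftrightarrow> (\<exists>f. is_kernel C m f)"

definition protosplit_mono :: "('o,'a) category \<Rightarrow> 'a \<Rightarrow> bool" where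
  "protosplit_mono C m \<longleftrightarrow> (\<exists>p. split_epi C p \<and> is_kernel C m p)"

definition proto_complete :: "('o,'a) category \<Rightarrow> 'o \<Rightarrow> bool" where
  "proto_complete C X \<longleftrightarrow> X \<in> Obj C \<and>
     (\<forall>m. protosplit_mono C m \<and> Dom C m = X \<longrightarrow> split_mono C m)"

definition equivalence_relation :: "('o,'a) category \<Rightarrow> 'o \<Rightarrow> 'a \<Rightarrow> 'a \<Rightarrow> 'o \<Rightarrow> bool" where
  "equivalence_relation C R r1 r2 Y \<longleftrightarrow>
     hom C r1 R Y \<and> hom C r2 R Y \<and>
     (\<forall>T x y. hom C x T R \<and> hom C y T R \<and> Comp C r1 x = Comp C r1 y \<and> Comp C r2 x = Comp C r2 y
        \<longrightarrow> x = y) \<and>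
     (\<forall>T a. hom C a T Y \<longrightarrow> (\<exists>d. hom C d T R \<and> Comp C r1 d = a \<and> Comp C r2 d = a)) \<and>
     (\<forall>T x. hom C x T R \<longrightarrow>
        (\<exists>y. hom C y T R \<and> Comp C r1 y = Comp C r2 x \<and> Comp C r2 y = Comp C r1 x)) \<and>
     (\<forall>T x y. hom C x T R \<and> hom C y T R \<and> Comp C r2 x = Comp C r1 y \<longrightarrow>
        (\<exists>z. hom C z T R \<and> Comp C r1 z = Comp C r1 x \<and> Comp C r2 z = Comp C r2 y))"

definition bourn_normal :: "('o,'a) category \<Rightarrow> 'a \<Rightarrow> bool" where
  "bourn_normal C m \<longleftrightarrow> mono C m \<and>
     (\<exists>R r1 r2 P \<pi>1 \<pi>2 mt.
        equivalence_relation C R r1 r2 (Cod C m) \<and>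
        is_product C P \<pi>1 \<pi>2 (Dom C m) (Dom C m) \<and>
        hom C mt P R \<and>
        Comp C r1 mt = Comp C m \<pi>1 \<and> Comp C r2 mt = Comp C m \<pi>2 \<and>
        is_pullback C r1 m mt \<pi>1)"

definition characteristic_mono :: "('o,'a) category \<Rightarrow> 'a \<Rightarrow> bool" where
  "characteristic_mono C u \<longleftrightarrow> mono C u \<and>
     (\<forall>n. bourn_normal C n \<and> Dom C n = Cod C u \<longrightarrow> bourn_normal C (Comp C n u))"

end

theory Submission
  imports Defs
begin

locale pcat =
  fixes C :: "('o,'a) category"
  assumes cat: "is_category C" and pt: "pointed C" and fl: "has_finite_limits C"
    and pm: "protomodular C"
begin

abbreviation cmp (infixr "\<cdot>" 55) where "g \<cdot> f \<equiv> Comp C g f"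

lemma catD:
  "\<And>f. f \<in> Arr C \<Longrightarrow> Dom C f \<in> Obj C \<and> Cod C f \<in> Obj C"
  "\<And>X. X \<in> Obj C \<Longrightarrow> hom C (Id C X) X X"
  "\<And>f g. f \<in> Arr C \<Longrightarrow> g \<in> Arr C \<Longrightarrow> Cod C f = Dom C g \<Longrightarrow> hom C (Comp C g f) (Dom C f) (Cod C g)"
  "\<And>f. f \<in> Arr C \<Longrightarrow> Comp C f (Id C (Dom C f)) = f"
  "\<And>f. f \<in> Arr C \<Longrightarrow> Comp C (Id C (Cod C f)) f = f"
  "\<And>f g h. f \<in> Arr C \<Longrightarrow> g \<in> Arr C \<Longrightarrow> h \<in> Arr C \<Longrightarrow> Cod C f = Dom C g \<Longrightarrow> Cod C g = Dom C h
            \<Longrightarrow> Comp C h (Comp C g f) = Comp C (Comp C h g) f"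
  using cat unfolding is_category_def by blast+

lemma hom_objs: "hom C f A B \<Longrightarrow> A \<in> Obj C \<and> B \<in> Obj C"
  unfolding hom_def using catD(1) by blast

lemma hom_arr: "hom C f A B \<Longrightarrow> f \<in> Arr C"
  unfolding hom_def by blast

lemma hom_id: "A \<in> Obj C \<Longrightarrow> hom C (Id C A) A A"
  by (rule catD(2))

lemma hom_comp: "hom C f A B \<Longrightarrow> hom C g B D \<Longrightarrow> hom C (g \<cdot> f) A D"
  unfolding hom_def using catD(3) unfolding hom_def by simp

lemma id_r: "hom C f A B \<Longrightarrow> f \<cdot> Id C A = f"
  unfolding hom_def using catD(4) by auto

lemma id_l: "hom C f A B \<Longrightarrow> Id C B \<cdot> f = f"
  unfolding hom_def using catD(5) by auto

lemma assoc: "hom C f A B \<Longrightarrow> hom C g B D \<Longrightarrow> hom C h D E \<Longrightarrow> (h \<cdot> g) \<cdot> f = h \<cdot> (g \<cdot> f)"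
  unfolding hom_def using catD(6) by simp

lemma hom_unique_dom: "hom C f A B \<Longrightarrow> hom C f A' B' \<Longrightarrow> A' = A \<and> B' = B"
  unfolding hom_def by blast

definition Z0 where "Z0 = (SOME Z. zero_obj C Z)"

lemma Z0: "zero_obj C Z0"
  using pt unfolding pointed_def Z0_def by (rule someI_ex)

lemma Z0_obj: "Z0 \<in> Obj C"
  using Z0 unfolding zero_obj_def initial_obj_def by blast

definition zin where "zin A = (THE h. hom C h A Z0)"
definition zout where "zout B = (THE g. hom C g Z0 B)"
definition zero where "zero A B = zout B \<cdot> zin A"

lemma zin: "A \<in> Obj C \<Longrightarrow> hom C (zin A) A Z0"
proof -
  assume "A \<in> Obj C"
  then have "\<exists>!h. hom C h A Z0" using Z0 unfolding zero_obj_def terminal_obj_def by blast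
  then show ?thesis unfolding zin_def by (rule theI')
qed

lemma zin_uniq: "hom C h A Z0 \<Longrightarrow> h = zin A"
proof -
  assume h: "hom C h A Z0"
  then have "\<exists>!h. hom C h A Z0" using Z0 hom_objs unfolding zero_obj_def terminal_obj_def by blast
  then show ?thesis unfolding zin_def using h by (simp add: the1_equality)
qed

lemma zout: "B \<in> Obj C \<Longrightarrow> hom C (zout B) Z0 B"
proof -
  assume "B \<in> Obj C"
  then have "\<exists>!h. hom C h Z0 B" using Z0 unfolding zero_obj_def initial_obj_def by blast
  then show ?thesis unfolding zout_def by (rule theI')
qed

lemma zout_uniq: "hom C h Z0 B \<Longrightarrow> h = zout B"
proof -
  assume h: "hom C h Z0 B"
  then have "\<exists>!h. hom C h Z0 B" using Z0 hom_objs unfolding zero_obj_def initial_obj_def by blast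
  then show ?thesis unfolding zout_def using h by (simp add: the1_equality)
qed

lemma zero_hom: "A \<in> Obj C \<Longrightarrow> B \<in> Obj C \<Longrightarrow> hom C (zero A B) A B"
  unfolding zero_def using zin zout hom_comp by blast

lemma zero_comp: "hom C f A B \<Longrightarrow> D \<in> Obj C \<Longrightarrow> zero B D \<cdot> f = zero A D"
proof -
  assume f: "hom C f A B" and D: "D \<in> Obj C"
  have A: "A \<in> Obj C" and B: "B \<in> Obj C" using hom_objs[OF f] by auto
  have "zero B D \<cdot> f = zout D \<cdot> (zin B \<cdot> f)"
    unfolding zero_def using assoc[OF f zin[OF B] zout[OF D]] .
  also have "zin B \<cdot> f = zin A" using zin_uniq hom_comp[OF f zin[OF B]] by blast
  finally show ?thesis unfolding zero_def .
qed

lemma comp_zero: "hom C g B D \<Longrightarrow> A \<in> Obj C \<Longrightarrow> g \<cdot> zero A B = zero A D"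
proof -
  assume g: "hom C g B D" and A: "A \<in> Obj C"
  have B: "B \<in> Obj C" and D: "D \<in> Obj C" using hom_objs[OF g] by auto
  have "g \<cdot> zero A B = (g \<cdot> zout B) \<cdot> zin A"
    unfolding zero_def using assoc[OF zin[OF A] zout[OF B] g] by simp
  also have "g \<cdot> zout B = zout D" using zout_uniq hom_comp[OF zout[OF B] g] by blast
  finally show ?thesis unfolding zero_def .
qed

lemma zero_arr_iff: "hom C f A B \<Longrightarrow> zero_arr C f \<longleftrightarrow> f = zero A B"
proof
  assume f: "hom C f A B" and z: "zero_arr C f"
  then obtain Z g h where Z: "zero_obj C Z" and h: "hom C h A Z" and g: "hom C g Z B"
    and fe: "f = g \<cdot> h" unfolding zero_arr_def hom_def by blast
  have A: "A \<in> Obj C" and B: "B \<in> Obj C" using hom_objs[OF f] by auto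
  have ZO: "Z \<in> Obj C" using hom_objs[OF h] by auto
  obtain i where i: "hom C i Z Z0" using Z0 ZO unfolding zero_obj_def terminal_obj_def by blast
  obtain j where j: "hom C j Z0 Z" using Z0 ZO unfolding zero_obj_def initial_obj_def by blast
  have ji: "j \<cdot> i = Id C Z"
    using Z ZO hom_comp[OF i j] hom_id[OF ZO] unfolding zero_obj_def initial_obj_def by blast
  have "f = g \<cdot> (Id C Z \<cdot> h)" using fe id_l[OF h] by simp
  also have "\<dots> = g \<cdot> (j \<cdot> (i \<cdot> h))" using ji assoc[OF h i j] by simp
  also have "\<dots> = (g \<cdot> j) \<cdot> (i \<cdot> h)" using assoc[OF hom_comp[OF h i] j g] by simp
  also have "\<dots> = zero A B" unfolding zero_def
    using zin_uniq[OF hom_comp[OF h i]] zout_uniq[OF hom_comp[OF j g]] by simp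
  finally show "f = zero A B" .
next
  assume f: "hom C f A B" and fz: "f = zero A B"
  have A: "A \<in> Obj C" and B: "B \<in> Obj C" using hom_objs[OF f] by auto
  have DC: "Dom C f = A" "Cod C f = B" using f unfolding hom_def by auto
  show "zero_arr C f" unfolding zero_arr_def
    apply (rule conjI, rule hom_arr[OF f])
    apply (rule exI[of _ Z0], rule exI[of _ "zout B"], rule exI[of _ "zin A"])
    using DC fz zin[OF A] zout[OF B] Z0 unfolding zero_def by simp
qed


lemma zero_arr_comp: "hom C f A B \<Longrightarrow> zero_arr C f \<longleftrightarrow> f = zero A B"
  by (rule zero_arr_iff)

section \<open>Kernels\<close>

lemma ex1_eqI: "\<exists>!x. P x \<Longrightarrow> P a \<Longrightarrow> P b \<Longrightarrow> a = b"
  by blast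

lemma kerD:
  assumes "is_kernel C k f"
  shows "hom C k (Dom C k) (Dom C f)" "hom C f (Dom C f) (Cod C f)"
    "f \<cdot> k = zero (Dom C k) (Cod C f)"
    "\<And>T x. hom C x T (Dom C f) \<Longrightarrow> f \<cdot> x = zero T (Cod C f) \<Longrightarrow> \<exists>h. hom C h T (Dom C k) \<and> k \<cdot> h = x"
    "\<And>T h1 h2. hom C h1 T (Dom C k) \<Longrightarrow> hom C h2 T (Dom C k) \<Longrightarrow> k \<cdot> h1 = k \<cdot> h2 \<Longrightarrow> h1 = h2"
proof -
  have K1: "k \<in> Arr C" and K2: "f \<in> Arr C" and K3: "Cod C k = Dom C f" and K4: "zero_arr C (f \<cdot> k)"
    and K5: "\<forall>T x. hom C x T (Dom C f) \<and> zero_arr C (f \<cdot> x) \<longrightarrow> (\<exists>!h. hom C h T (Dom C k) \<and> k \<cdot> h = x)"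
    using assms unfolding is_kernel_def by auto
  have k: "hom C k (Dom C k) (Dom C f)" and f: "hom C f (Dom C f) (Cod C f)"
    using K1 K2 K3 unfolding hom_def by auto
  show "hom C k (Dom C k) (Dom C f)" "hom C f (Dom C f) (Cod C f)" by fact+
  have fk: "hom C (f \<cdot> k) (Dom C k) (Cod C f)" using hom_comp[OF k f] .
  show fk0: "f \<cdot> k = zero (Dom C k) (Cod C f)"
    using K4 zero_arr_iff[OF fk] by simp
  have U: "\<And>T x. hom C x T (Dom C f) \<Longrightarrow> zero_arr C (f \<cdot> x) \<Longrightarrow> (\<exists>!h. hom C h T (Dom C k) \<and> k \<cdot> h = x)"
    using K5 by simp
  show "\<And>T x. hom C x T (Dom C f) \<Longrightarrow> f \<cdot> x = zero T (Cod C f) \<Longrightarrow> \<exists>h. hom C h T (Dom C k) \<and> k \<cdot> h = x"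
  proof -
    fix T x assume x: "hom C x T (Dom C f)" and z: "f \<cdot> x = zero T (Cod C f)"
    have "zero_arr C (f \<cdot> x)" using zero_arr_iff[OF hom_comp[OF x f]] z by simp
    from U[OF x this] show "\<exists>h. hom C h T (Dom C k) \<and> k \<cdot> h = x" by (rule ex1_implies_ex)
  qed
  show "\<And>T h1 h2. hom C h1 T (Dom C k) \<Longrightarrow> hom C h2 T (Dom C k) \<Longrightarrow> k \<cdot> h1 = k \<cdot> h2 \<Longrightarrow> h1 = h2"
  proof -
    fix T h1 h2 assume h1: "hom C h1 T (Dom C k)" and h2: "hom C h2 T (Dom C k)" and e: "k \<cdot> h1 = k \<cdot> h2"
    have x: "hom C (k \<cdot> h1) T (Dom C f)" using hom_comp[OF h1 k] .
    have TO: "T \<in> Obj C" "Cod C f \<in> Obj C" using hom_objs h1 f by auto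
    have "f \<cdot> (k \<cdot> h1) = zero T (Cod C f)"
      using assoc[OF h1 k f] fk0 zero_comp[OF h1 TO(2)] by simp
    then have "zero_arr C (f \<cdot> (k \<cdot> h1))" using zero_arr_iff[OF hom_comp[OF x f]] by simp
    note u1 = U[OF x this]
    show "h1 = h2" by (rule ex1_eqI[OF u1]) (use h1 h2 e in simp_all)
  qed
qed

lemma kerI:
  assumes k: "hom C k K A" and f: "hom C f A B" and fk: "f \<cdot> k = zero K B"
    and ex: "\<And>T x. hom C x T A \<Longrightarrow> f \<cdot> x = zero T B \<Longrightarrow> \<exists>h. hom C h T K \<and> k \<cdot> h = x"
    and mo: "\<And>T h1 h2. hom C h1 T K \<Longrightarrow> hom C h2 T K \<Longrightarrow> k \<cdot> h1 = k \<cdot> h2 \<Longrightarrow> h1 = h2"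
  shows "is_kernel C k f"
proof -
  have D: "Dom C k = K" "Cod C k = A" "Dom C f = A" "Cod C f = B" using k f unfolding hom_def by auto
  show ?thesis unfolding is_kernel_def
  proof (intro conjI allI impI)
    show "k \<in> Arr C" "f \<in> Arr C" using k f hom_arr by auto
    show "Cod C k = Dom C f" using D by simp
    show "zero_arr C (f \<cdot> k)" using zero_arr_iff[OF hom_comp[OF k f]] fk by simp
  next
    fix T x assume a: "hom C x T (Dom C f) \<and> zero_arr C (f \<cdot> x)"
    then have x: "hom C x T A" using D by simp
    have "f \<cdot> x = zero T B" using a zero_arr_iff[OF hom_comp[OF x f]] by simp
    then obtain h where "hom C h T K" "k \<cdot> h = x" using ex x by blast
    then show "\<exists>!h. hom C h T (Dom C k) \<and> k \<cdot> h = x" unfolding D(1) using mo by (intro ex1I[of _ h]) auto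
  qed
qed

lemma mono_I:
  assumes m: "hom C m A B"
    and mo: "\<And>T h1 h2. hom C h1 T A \<Longrightarrow> hom C h2 T A \<Longrightarrow> m \<cdot> h1 = m \<cdot> h2 \<Longrightarrow> h1 = h2"
  shows "mono C m"
  unfolding mono_def
proof (intro conjI allI impI)
  show "m \<in> Arr C" using m hom_arr by blast
  fix x y assume a: "x \<in> Arr C \<and> y \<in> Arr C \<and> Cod C x = Dom C m \<and> Cod C y = Dom C m \<and> Dom C x = Dom C y \<and> m \<cdot> x = m \<cdot> y"
  have "hom C x (Dom C x) A" "hom C y (Dom C x) A" using a m unfolding hom_def by auto
  then show "x = y" using mo a by blast
qed

lemma mono_D:
  assumes "mono C m" "hom C m A B" "hom C h1 T A" "hom C h2 T A" "m \<cdot> h1 = m \<cdot> h2"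
  shows "h1 = h2"
  using assms unfolding mono_def hom_def by auto

section \<open>Pullbacks, products, equalizers\<close>

lemma pb_exists:
  assumes f: "hom C f A D" and g: "hom C g B D"
  shows "\<exists>P p q. hom C p P A \<and> hom C q P B \<and> f \<cdot> p = g \<cdot> q \<and>
     (\<forall>T a b. hom C a T A \<and> hom C b T B \<and> f \<cdot> a = g \<cdot> b \<longrightarrow> (\<exists>!h. hom C h T P \<and> p \<cdot> h = a \<and> q \<cdot> h = b))"
proof -
  have "has_pullbacks C" using fl unfolding has_finite_limits_def by blast
  moreover have "f \<in> Arr C \<and> g \<in> Arr C \<and> Cod C f = Cod C g" using f g unfolding hom_def by auto
  ultimately obtain p q where pb: "is_pullback C f g p q"
    unfolding has_pullbacks_def by blast
  have D: "Dom C f = A" "Dom C g = B" using f g unfolding hom_def by auto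
  show ?thesis
    apply (rule exI[of _ "Dom C p"], rule exI[of _ p], rule exI[of _ q])
    using pb unfolding is_pullback_def D by (elim conjE) (intro conjI; assumption)
qed

lemma prod_exists:
  assumes A: "A \<in> Obj C" and B: "B \<in> Obj C"
  shows "\<exists>P p1 p2. is_product C P p1 p2 A B"
proof -
  obtain P p q where p: "hom C p P A" and q: "hom C q P B" and c: "zin A \<cdot> p = zin B \<cdot> q"
    and U: "\<forall>T a b. hom C a T A \<and> hom C b T B \<and> zin A \<cdot> a = zin B \<cdot> b \<longrightarrow> (\<exists>!h. hom C h T P \<and> p \<cdot> h = a \<and> q \<cdot> h = b)"
    using pb_exists[OF zin[OF A] zin[OF B]] by blast
  have "is_product C P p q A B" unfolding is_product_def
  proof (intro conjI allI impI)
    show "hom C p P A" "hom C q P B" by fact+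
    fix T a b assume ab: "hom C a T A \<and> hom C b T B"
    have "zin A \<cdot> a = zin B \<cdot> b"
      using zin_uniq[OF hom_comp[OF conjunct1[OF ab] zin[OF A]]] zin_uniq[OF hom_comp[OF conjunct2[OF ab] zin[OF B]]]
      by simp
    then show "\<exists>!h. hom C h T P \<and> p \<cdot> h = a \<and> q \<cdot> h = b" using U[rule_format, of a T b] ab by simp
  qed
  then show ?thesis by blast
qed

lemma prodD:
  assumes "is_product C P p1 p2 A B"
  shows "hom C p1 P A" "hom C p2 P B"
    "\<And>T a b. hom C a T A \<Longrightarrow> hom C b T B \<Longrightarrow> \<exists>h. hom C h T P \<and> p1 \<cdot> h = a \<and> p2 \<cdot> h = b"
    "\<And>T h h'. hom C h T P \<Longrightarrow> hom C h' T P \<Longrightarrow> p1 \<cdot> h = p1 \<cdot> h' \<Longrightarrow> p2 \<cdot> h = p2 \<cdot> h' \<Longrightarrow> h = h'"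
proof -
  show p1: "hom C p1 P A" using assms unfolding is_product_def by (elim conjE)
  show p2: "hom C p2 P B" using assms unfolding is_product_def by (elim conjE)
  have U: "\<forall>T a b. hom C a T A \<and> hom C b T B \<longrightarrow> (\<exists>!h. hom C h T P \<and> p1 \<cdot> h = a \<and> p2 \<cdot> h = b)"
    using assms unfolding is_product_def by (elim conjE)
  show "\<And>T a b. hom C a T A \<Longrightarrow> hom C b T B \<Longrightarrow> \<exists>h. hom C h T P \<and> p1 \<cdot> h = a \<and> p2 \<cdot> h = b"
  proof -
    fix T a b assume "hom C a T A" "hom C b T B"
    then have "\<exists>!h. hom C h T P \<and> p1 \<cdot> h = a \<and> p2 \<cdot> h = b" using U by blast
    then show "\<exists>h. hom C h T P \<and> p1 \<cdot> h = a \<and> p2 \<cdot> h = b" by (rule ex1_implies_ex)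
  qed
  fix T h h' assume h: "hom C h T P" and h': "hom C h' T P" and e1: "p1 \<cdot> h = p1 \<cdot> h'" and e2: "p2 \<cdot> h = p2 \<cdot> h'"
  have "\<exists>!g. hom C g T P \<and> p1 \<cdot> g = p1 \<cdot> h \<and> p2 \<cdot> g = p2 \<cdot> h"
    using U hom_comp[OF h p1] hom_comp[OF h p2] by blast
  note u1 = this
  show "h = h'" by (rule ex1_eqI[OF u1]) (use h h' e1 e2 in simp_all)
qed

lemma eq_exists:
  assumes al: "hom C \<alpha> A W" and be: "hom C \<beta> A W"
  shows "\<exists>E e. hom C e E A \<and> \<alpha> \<cdot> e = \<beta> \<cdot> e \<and>
     (\<forall>T x. hom C x T A \<and> \<alpha> \<cdot> x = \<beta> \<cdot> x \<longrightarrow> (\<exists>h. hom C h T E \<and> e \<cdot> h = x)) \<and>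
     (\<forall>T h1 h2. hom C h1 T E \<and> hom C h2 T E \<and> e \<cdot> h1 = e \<cdot> h2 \<longrightarrow> h1 = h2)"
proof -
  have A: "A \<in> Obj C" and W: "W \<in> Obj C" using hom_objs al by auto
  obtain P p1 p2 where Pr: "is_product C P p1 p2 W W" using prod_exists[OF W W] by blast
  note PD = prodD[OF Pr]
  obtain ab where ab: "hom C ab A P" "p1 \<cdot> ab = \<alpha>" "p2 \<cdot> ab = \<beta>" using PD(3)[OF al be] by blast
  obtain d where d: "hom C d W P" "p1 \<cdot> d = Id C W" "p2 \<cdot> d = Id C W" using PD(3)[OF hom_id[OF W] hom_id[OF W]] by blast
  obtain E e q where e: "hom C e E A" and q: "hom C q E W" and c: "ab \<cdot> e = d \<cdot> q"
    and U: "\<forall>T a b. hom C a T A \<and> hom C b T W \<and> ab \<cdot> a = d \<cdot> b \<longrightarrow> (\<exists>!h. hom C h T E \<and> e \<cdot> h = a \<and> q \<cdot> h = b)"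
    using pb_exists[OF ab(1) d(1)] by blast
  have ae: "\<alpha> \<cdot> e = q"
    using assoc[OF e ab(1) PD(1)] assoc[OF q d(1) PD(1)] c ab(2) d(2) id_l[OF q] by simp
  have be': "\<beta> \<cdot> e = q"
    using assoc[OF e ab(1) PD(2)] assoc[OF q d(1) PD(2)] c ab(3) d(3) id_l[OF q] by simp
  have X1: "\<forall>T x. hom C x T A \<and> \<alpha> \<cdot> x = \<beta> \<cdot> x \<longrightarrow> (\<exists>h. hom C h T E \<and> e \<cdot> h = x)"
  proof (intro allI impI)
    fix T x assume a: "hom C x T A \<and> \<alpha> \<cdot> x = \<beta> \<cdot> x"
    then have x: "hom C x T A" by blast
    have ax: "hom C (\<alpha> \<cdot> x) T W" using hom_comp[OF x al] .
    have "ab \<cdot> x = d \<cdot> (\<alpha> \<cdot> x)"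
    proof (rule PD(4)[OF hom_comp[OF x ab(1)] hom_comp[OF ax d(1)]])
      show "p1 \<cdot> (ab \<cdot> x) = p1 \<cdot> (d \<cdot> (\<alpha> \<cdot> x))"
        using assoc[OF x ab(1) PD(1)] assoc[OF ax d(1) PD(1)] ab(2) d(2) id_l[OF ax] by simp
      show "p2 \<cdot> (ab \<cdot> x) = p2 \<cdot> (d \<cdot> (\<alpha> \<cdot> x))"
        using assoc[OF x ab(1) PD(2)] assoc[OF ax d(1) PD(2)] ab(3) d(3) id_l[OF ax] a by simp
    qed
    then have "\<exists>!h. hom C h T E \<and> e \<cdot> h = x \<and> q \<cdot> h = \<alpha> \<cdot> x" using U[rule_format, of x T "\<alpha> \<cdot> x"] x ax by simp
    then show "\<exists>h. hom C h T E \<and> e \<cdot> h = x" by auto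
  qed
  have X2: "\<forall>T h1 h2. hom C h1 T E \<and> hom C h2 T E \<and> e \<cdot> h1 = e \<cdot> h2 \<longrightarrow> h1 = h2"
  proof (intro allI impI)
    fix T h1 h2 assume a: "hom C h1 T E \<and> hom C h2 T E \<and> e \<cdot> h1 = e \<cdot> h2"
    then have h1: "hom C h1 T E" and h2: "hom C h2 T E" and eh: "e \<cdot> h1 = e \<cdot> h2" by auto
    have x: "hom C (e \<cdot> h1) T A" using hom_comp[OF h1 e] .
    have q1: "q \<cdot> h1 = \<alpha> \<cdot> (e \<cdot> h1)" using assoc[OF h1 e al] ae by simp
    have q2: "q \<cdot> h2 = \<alpha> \<cdot> (e \<cdot> h1)" using assoc[OF h2 e al] ae eh by simp
    have "ab \<cdot> (e \<cdot> h1) = d \<cdot> (q \<cdot> h1)" using assoc[OF h1 e ab(1)] assoc[OF h1 q d(1)] c by simp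
    then have "\<exists>!h. hom C h T E \<and> e \<cdot> h = e \<cdot> h1 \<and> q \<cdot> h = q \<cdot> h1"
      using U[rule_format, of "e \<cdot> h1" T "q \<cdot> h1"] x hom_comp[OF h1 q] by simp
    note u1 = this
    show "h1 = h2" by (rule ex1_eqI[OF u1]) (use h1 h2 eh q1 q2 in simp_all)
  qed
  have "\<alpha> \<cdot> e = \<beta> \<cdot> e" using ae be' by simp
  with e X1 X2 show ?thesis by blast
qed

lemma iso_id: "A \<in> Obj C \<Longrightarrow> iso C (Id C A)"
  unfolding iso_def using hom_id id_l hom_arr unfolding hom_def by metis

lemma jointly_epic:
  assumes k: "is_kernel C k p" and p: "hom C p A B" and s: "hom C s B A" and ps: "p \<cdot> s = Id C B"
    and al: "hom C \<alpha> A W" and be: "hom C \<beta> A W" and ak: "\<alpha> \<cdot> k = \<beta> \<cdot> k" and as: "\<alpha> \<cdot> s = \<beta> \<cdot> s"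
  shows "\<alpha> = \<beta>"
proof -
  define K where "K = Dom C k"
  note KD = kerD[OF k]
  have DA: "Dom C p = A" "Cod C p = B" using p unfolding hom_def by auto
  have kh: "hom C k K A" using KD(1) DA K_def by simp
  have K: "K \<in> Obj C" and B: "B \<in> Obj C" and AO: "A \<in> Obj C" using hom_objs kh p by auto
  obtain E e where e: "hom C e E A" and aee: "\<alpha> \<cdot> e = \<beta> \<cdot> e"
    and F: "\<forall>T x. hom C x T A \<and> \<alpha> \<cdot> x = \<beta> \<cdot> x \<longrightarrow> (\<exists>h. hom C h T E \<and> e \<cdot> h = x)"
    and M: "\<forall>T h1 h2. hom C h1 T E \<and> hom C h2 T E \<and> e \<cdot> h1 = e \<cdot> h2 \<longrightarrow> h1 = h2"
    using eq_exists[OF al be] by blast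
  obtain k' where k': "hom C k' K E" "e \<cdot> k' = k" using F kh ak by blast
  obtain s' where s': "hom C s' B E" "e \<cdot> s' = s" using F s as by blast
  define p' where "p' = p \<cdot> e"
  have p': "hom C p' E B" unfolding p'_def using hom_comp[OF e p] .
  have p's': "p' \<cdot> s' = Id C B" unfolding p'_def using assoc[OF s'(1) e p] s'(2) ps by simp
  have kk: "is_kernel C k' p'"
  proof (rule kerI[OF k'(1) p'])
    show "p' \<cdot> k' = zero K B" unfolding p'_def using assoc[OF k'(1) e p] k'(2) KD(3) DA K_def by simp
  next
    fix T x assume x: "hom C x T E" and z: "p' \<cdot> x = zero T B"
    have ex: "hom C (e \<cdot> x) T A" using hom_comp[OF x e] .
    have "p \<cdot> (e \<cdot> x) = zero T (Cod C p)" using z assoc[OF x e p] DA unfolding p'_def by simp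
    then obtain h where h: "hom C h T K" "k \<cdot> h = e \<cdot> x" using KD(4) ex DA K_def by metis
    have "e \<cdot> (k' \<cdot> h) = e \<cdot> x" using assoc[OF h(1) k'(1) e] k'(2) h(2) by simp
    then have "k' \<cdot> h = x" using M hom_comp[OF h(1) k'(1)] x by blast
    then show "\<exists>h. hom C h T K \<and> k' \<cdot> h = x" using h by blast
  next
    fix T h1 h2 assume h1: "hom C h1 T K" and h2: "hom C h2 T K" and eq: "k' \<cdot> h1 = k' \<cdot> h2"
    have "k \<cdot> h1 = k \<cdot> h2" using assoc[OF h1 k'(1) e] assoc[OF h2 k'(1) e] k'(2) eq by metis
    then show "h1 = h2" using KD(5) h1 h2 K_def by blast
  qed
  have DK': "Dom C k' = K" "Dom C p' = E" "Cod C p' = B" using k'(1) p' unfolding hom_def by auto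
  have "iso C e"
    using pm[unfolded protomodular_def, rule_format, of k' p' s' k p s "Id C K" e "Id C B"]
    using kk p's' k ps s'(1) s DK' DA hom_id[OF K] hom_id[OF B] e K_def
      k'(2) s'(2) id_r[OF kh] id_r[OF s] id_l[OF p'] p'_def iso_id[OF K] iso_id[OF B]
    by simp
  then obtain g where g: "hom C g A E" "e \<cdot> g = Id C A"
    unfolding iso_def using e unfolding hom_def by auto
  have "\<alpha> = \<alpha> \<cdot> (e \<cdot> g)" using g id_r[OF al] by simp
  also have "\<dots> = \<beta> \<cdot> (e \<cdot> g)" using assoc[OF g(1) e al] assoc[OF g(1) e be] aee by simp
  also have "\<dots> = \<beta>" using g id_r[OF be] by simp
  finally show ?thesis .
qed


lemma cs_assoc: "f \<in> Arr C \<Longrightarrow> g \<in> Arr C \<Longrightarrow> h \<in> Arr C \<Longrightarrow> Cod C f = Dom C g \<Longrightarrow> Cod C g = Dom C h \<Longrightarrow> (h \<cdot> g) \<cdot> f = h \<cdot> (g \<cdot> f)"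
  using catD(6) by simp
lemma cs_arr: "f \<in> Arr C \<Longrightarrow> g \<in> Arr C \<Longrightarrow> Cod C f = Dom C g \<Longrightarrow> g \<cdot> f \<in> Arr C"
  using catD(3) unfolding hom_def by blast
lemma cs_dom: "f \<in> Arr C \<Longrightarrow> g \<in> Arr C \<Longrightarrow> Cod C f = Dom C g \<Longrightarrow> Dom C (g \<cdot> f) = Dom C f"
  using catD(3) unfolding hom_def by blast
lemma cs_cod: "f \<in> Arr C \<Longrightarrow> g \<in> Arr C \<Longrightarrow> Cod C f = Dom C g \<Longrightarrow> Cod C (g \<cdot> f) = Cod C g"
  using catD(3) unfolding hom_def by blast
lemma cs_idl: "f \<in> Arr C \<Longrightarrow> Cod C f = B \<Longrightarrow> Id C B \<cdot> f = f"
  using catD(5) by blast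
lemma cs_idr: "f \<in> Arr C \<Longrightarrow> Dom C f = A \<Longrightarrow> f \<cdot> Id C A = f"
  using catD(4) by blast
lemma cs_id: "A \<in> Obj C \<Longrightarrow> Id C A \<in> Arr C" "A \<in> Obj C \<Longrightarrow> Dom C (Id C A) = A" "A \<in> Obj C \<Longrightarrow> Cod C (Id C A) = A"
  using catD(2) unfolding hom_def by blast+
lemma cs_zero: "A \<in> Obj C \<Longrightarrow> B \<in> Obj C \<Longrightarrow> zero A B \<in> Arr C"
  "A \<in> Obj C \<Longrightarrow> B \<in> Obj C \<Longrightarrow> Dom C (zero A B) = A"
  "A \<in> Obj C \<Longrightarrow> B \<in> Obj C \<Longrightarrow> Cod C (zero A B) = B"
  using zero_hom unfolding hom_def by blast+
lemma cs_zc: "f \<in> Arr C \<Longrightarrow> Cod C f = B \<Longrightarrow> D \<in> Obj C \<Longrightarrow> zero B D \<cdot> f = zero (Dom C f) D"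
  using zero_comp[of f "Dom C f" B D] unfolding hom_def by blast
lemma cs_cz: "g \<in> Arr C \<Longrightarrow> Dom C g = B \<Longrightarrow> A \<in> Obj C \<Longrightarrow> g \<cdot> zero A B = zero A (Cod C g)"
  using comp_zero[of g B "Cod C g" A] unfolding hom_def by blast

lemmas cs = cs_assoc cs_arr cs_dom cs_cod cs_idl cs_idr cs_id cs_zero cs_zc cs_cz

lemma L: "g \<cdot> f = t \<Longrightarrow> f \<in> Arr C \<Longrightarrow> g \<in> Arr C \<Longrightarrow> Cod C f = Dom C g \<Longrightarrow> x \<in> Arr C \<Longrightarrow> Cod C x = Dom C f \<Longrightarrow> g \<cdot> (f \<cdot> x) = t \<cdot> x"
  using cs_assoc by metis

lemma erD:
  assumes "equivalence_relation C R r1 r2 Y"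
  shows "hom C r1 R Y" "hom C r2 R Y"
    "\<And>T x y. hom C x T R \<Longrightarrow> hom C y T R \<Longrightarrow> r1 \<cdot> x = r1 \<cdot> y \<Longrightarrow> r2 \<cdot> x = r2 \<cdot> y \<Longrightarrow> x = y"
    "\<And>T a. hom C a T Y \<Longrightarrow> \<exists>d. hom C d T R \<and> r1 \<cdot> d = a \<and> r2 \<cdot> d = a"
    "\<And>T x. hom C x T R \<Longrightarrow> \<exists>y. hom C y T R \<and> r1 \<cdot> y = r2 \<cdot> x \<and> r2 \<cdot> y = r1 \<cdot> x"
    "\<And>T x y. hom C x T R \<Longrightarrow> hom C y T R \<Longrightarrow> r2 \<cdot> x = r1 \<cdot> y \<Longrightarrow> \<exists>z. hom C z T R \<and> r1 \<cdot> z = r1 \<cdot> x \<and> r2 \<cdot> z = r2 \<cdot> y"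
  using assms unfolding equivalence_relation_def by blast+

lemma erI:
  assumes "hom C r1 R Y" "hom C r2 R Y"
    "\<And>T x y. hom C x T R \<Longrightarrow> hom C y T R \<Longrightarrow> r1 \<cdot> x = r1 \<cdot> y \<Longrightarrow> r2 \<cdot> x = r2 \<cdot> y \<Longrightarrow> x = y"
    "\<And>T a. hom C a T Y \<Longrightarrow> \<exists>d. hom C d T R \<and> r1 \<cdot> d = a \<and> r2 \<cdot> d = a"
    "\<And>T x. hom C x T R \<Longrightarrow> \<exists>y. hom C y T R \<and> r1 \<cdot> y = r2 \<cdot> x \<and> r2 \<cdot> y = r1 \<cdot> x"
    "\<And>T x y. hom C x T R \<Longrightarrow> hom C y T R \<Longrightarrow> r2 \<cdot> x = r1 \<cdot> y \<Longrightarrow> \<exists>z. hom C z T R \<and> r1 \<cdot> z = r1 \<cdot> x \<and> r2 \<cdot> z = r2 \<cdot> y"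
  shows "equivalence_relation C R r1 r2 Y"
  using assms unfolding equivalence_relation_def by blast

lemma pbD:
  assumes "is_pullback C f g p q"
  shows "\<And>T a b. hom C a T (Dom C f) \<Longrightarrow> hom C b T (Dom C g) \<Longrightarrow> f \<cdot> a = g \<cdot> b \<Longrightarrow> \<exists>h. hom C h T (Dom C p) \<and> p \<cdot> h = a \<and> q \<cdot> h = b"
proof -
  have U: "\<forall>T a b. hom C a T (Dom C f) \<and> hom C b T (Dom C g) \<and> f \<cdot> a = g \<cdot> b \<longrightarrow>
        (\<exists>!h. hom C h T (Dom C p) \<and> p \<cdot> h = a \<and> q \<cdot> h = b)"
    using assms unfolding is_pullback_def by (elim conjE)
  fix T a b assume "hom C a T (Dom C f)" "hom C b T (Dom C g)" "f \<cdot> a = g \<cdot> b"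
  then have "\<exists>!h. hom C h T (Dom C p) \<and> p \<cdot> h = a \<and> q \<cdot> h = b" using U by blast
  then show "\<exists>h. hom C h T (Dom C p) \<and> p \<cdot> h = a \<and> q \<cdot> h = b" by (rule ex1_implies_ex)
qed

lemma pbI:
  assumes f: "hom C f A D" and g: "hom C g B D" and p: "hom C p P A" and q: "hom C q P B"
    and c: "f \<cdot> p = g \<cdot> q"
    and ex: "\<And>T a b. hom C a T A \<Longrightarrow> hom C b T B \<Longrightarrow> f \<cdot> a = g \<cdot> b \<Longrightarrow> \<exists>h. hom C h T P \<and> p \<cdot> h = a \<and> q \<cdot> h = b"
    and un: "\<And>T h1 h2. hom C h1 T P \<Longrightarrow> hom C h2 T P \<Longrightarrow> p \<cdot> h1 = p \<cdot> h2 \<Longrightarrow> q \<cdot> h1 = q \<cdot> h2 \<Longrightarrow> h1 = h2"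
  shows "is_pullback C f g p q"
proof -
  have D: "Dom C f = A" "Dom C g = B" "Dom C p = P" "Cod C f = D" "Cod C g = D" using f g p unfolding hom_def by auto
  show ?thesis unfolding is_pullback_def D
  proof (intro conjI allI impI)
    show "f \<in> Arr C" "g \<in> Arr C" using f g hom_arr by auto
    show "D = D" ..
    show "hom C p P A" "hom C q P B" "f \<cdot> p = g \<cdot> q" by fact+
    fix T a b assume a: "hom C a T A \<and> hom C b T B \<and> f \<cdot> a = g \<cdot> b"
    then obtain h where h: "hom C h T P" "p \<cdot> h = a" "q \<cdot> h = b" using ex by blast
    show "\<exists>!h. hom C h T P \<and> p \<cdot> h = a \<and> q \<cdot> h = b"
    proof (rule ex1I[of _ h])
      show "hom C h T P \<and> p \<cdot> h = a \<and> q \<cdot> h = b" using h by blast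
      fix h' assume "hom C h' T P \<and> p \<cdot> h' = a \<and> q \<cdot> h' = b"
      then show "h' = h" using un[of h' T h] h by auto
    qed
  qed
qed

lemma prod_kernel:
  assumes Pr: "is_product C P q1 q2 A B" and j: "hom C j B P" and j1: "q1 \<cdot> j = zero B A" and j2: "q2 \<cdot> j = Id C B"
  shows "is_kernel C j q1"
proof -
  note PD = prodD[OF Pr]
  have AO: "A \<in> Obj C" "B \<in> Obj C" "P \<in> Obj C" using hom_objs PD(1) j by auto
  note H = PD(1)[unfolded hom_def] PD(2)[unfolded hom_def] j[unfolded hom_def]
  show ?thesis
  proof (rule kerI[OF j PD(1) j1])
    fix T x assume x: "hom C x T P" and z: "q1 \<cdot> x = zero T A"
    have TO: "T \<in> Obj C" using hom_objs x by auto
    have "j \<cdot> (q2 \<cdot> x) = x"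
    proof (rule PD(4))
      show "hom C (j \<cdot> (q2 \<cdot> x)) T P" "hom C x T P" using x j PD(2) hom_comp by blast+
      show "q1 \<cdot> (j \<cdot> (q2 \<cdot> x)) = q1 \<cdot> x" using z x H AO TO by (simp add: cs L[OF j1] hom_def)
      show "q2 \<cdot> (j \<cdot> (q2 \<cdot> x)) = q2 \<cdot> x" using x H AO TO by (simp add: cs L[OF j2] hom_def)
    qed
    then show "\<exists>h. hom C h T B \<and> j \<cdot> h = x" using hom_comp[OF x PD(2)] by blast
  next
    fix T h1 h2 assume h1: "hom C h1 T B" and h2: "hom C h2 T B" and e: "j \<cdot> h1 = j \<cdot> h2"
    have "q2 \<cdot> (j \<cdot> h1) = q2 \<cdot> (j \<cdot> h2)" using e by simp
    then show "h1 = h2" using h1 h2 H AO by (simp add: cs L[OF j2] hom_def)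
  qed
qed


lemma main:
  assumes pcX: "proto_complete C X" and uk: "is_kernel C u f" and uX: "Cod C u = X"
    and bn: "bourn_normal C n" and nX: "Dom C n = X"
  shows "bourn_normal C (n \<cdot> u)"
proof -
  define S where "S = Dom C u"
  define B where "B = Cod C f"
  define Y where "Y = Cod C n"
  note UK = kerD[OF uk]
  have fX: "Dom C f = X" using uk uX unfolding is_kernel_def by (elim conjE) simp
  have hu: "hom C u S X" and hf: "hom C f X B" using UK(1,2) fX S_def B_def by simp_all
  have fu: "f \<cdot> u = zero S B" using UK(3) S_def B_def by simp
  have mn: "mono C n" using bn unfolding bourn_normal_def by blast
  have hn: "hom C n X Y" using mn nX Y_def unfolding mono_def hom_def by simp
  obtain R r1 r2 P p1 p2 mt where ER: "equivalence_relation C R r1 r2 Y"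
    and Pr: "is_product C P p1 p2 X X" and hmt: "hom C mt P R"
    and c1: "r1 \<cdot> mt = n \<cdot> p1" and c2: "r2 \<cdot> mt = n \<cdot> p2" and PB: "is_pullback C r1 n mt p1"
    using bn nX unfolding bourn_normal_def Y_def by blast
  note ERD = erD[OF ER]
  note PD = prodD[OF Pr]
  have DD: "Dom C r1 = R" "Dom C mt = P" using ERD(1) hmt unfolding hom_def by auto
  have PBE: "\<And>T a b. hom C a T R \<Longrightarrow> hom C b T X \<Longrightarrow> r1 \<cdot> a = n \<cdot> b \<Longrightarrow> \<exists>h. hom C h T P \<and> mt \<cdot> h = a \<and> p1 \<cdot> h = b"
    using pbD[OF PB] DD nX by simp
  have XO: "X \<in> Obj C" and YO: "Y \<in> Obj C" and SO: "S \<in> Obj C" and BO: "B \<in> Obj C"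
    and RO: "R \<in> Obj C" and PO: "P \<in> Obj C"
    using hom_objs hu hf hn hmt by auto
  have mu: "\<And>T h1 h2. hom C h1 T S \<Longrightarrow> hom C h2 T S \<Longrightarrow> u \<cdot> h1 = u \<cdot> h2 \<Longrightarrow> h1 = h2"
    using UK(5) S_def by blast
  have mn': "\<And>T h1 h2. hom C h1 T X \<Longrightarrow> hom C h2 T X \<Longrightarrow> n \<cdot> h1 = n \<cdot> h2 \<Longrightarrow> h1 = h2"
    using mono_D[OF mn hn] by blast
  note H0 = hu[unfolded hom_def] hf[unfolded hom_def] hn[unfolded hom_def] hmt[unfolded hom_def]
    ERD(1)[unfolded hom_def] ERD(2)[unfolded hom_def] PD(1)[unfolded hom_def] PD(2)[unfolded hom_def]
    XO YO SO BO RO PO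
  have JM: "\<And>T x y. hom C x T R \<Longrightarrow> hom C y T R \<Longrightarrow> r1 \<cdot> x = r1 \<cdot> y \<Longrightarrow> r2 \<cdot> x = r2 \<cdot> y \<Longrightarrow> x = y"
    by (rule ERD(3))

  obtain e01 where he01: "hom C e01 X P" and e01a: "p1 \<cdot> e01 = zero X X" and e01b: "p2 \<cdot> e01 = Id C X"
    using PD(3)[OF zero_hom[OF XO XO] hom_id[OF XO]] by blast
  define k where "k = mt \<cdot> e01"
  have hk: "hom C k X R" unfolding k_def using hom_comp[OF he01 hmt] .
  note H1 = H0 he01[unfolded hom_def] hk[unfolded hom_def]
  have rk1: "r1 \<cdot> k = zero X Y" unfolding k_def using H1 by (simp add: cs L[OF c1] e01a)
  have rk2: "r2 \<cdot> k = n" unfolding k_def using H1 by (simp add: cs L[OF c2] e01b)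
  have kerK: "is_kernel C k r1"
  proof (rule kerI[OF hk ERD(1) rk1])
    fix T x assume x: "hom C x T R" and z: "r1 \<cdot> x = zero T Y"
    have TO: "T \<in> Obj C" using hom_objs x by auto
    have "r1 \<cdot> x = n \<cdot> zero T X" using z H1 TO by (simp add: cs)
    then obtain h' where h': "hom C h' T P" "mt \<cdot> h' = x" "p1 \<cdot> h' = zero T X"
      using PBE[OF x zero_hom[OF TO XO]] by blast
    have "e01 \<cdot> (p2 \<cdot> h') = h'"
    proof (rule PD(4))
      show "hom C (e01 \<cdot> (p2 \<cdot> h')) T P" "hom C h' T P" using h' he01 PD(2) hom_comp by blast+
      show "p1 \<cdot> (e01 \<cdot> (p2 \<cdot> h')) = p1 \<cdot> h'" using h' H1 TO by (simp add: cs L[OF e01a] hom_def)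
      show "p2 \<cdot> (e01 \<cdot> (p2 \<cdot> h')) = p2 \<cdot> h'" using h' H1 TO by (simp add: cs L[OF e01b] hom_def)
    qed
    then have "k \<cdot> (p2 \<cdot> h') = x" unfolding k_def using h' H1 by (simp add: cs hom_def)
    then show "\<exists>h. hom C h T X \<and> k \<cdot> h = x" using hom_comp[OF h'(1) PD(2)] by blast
  next
    fix T h1 h2 assume h1: "hom C h1 T X" and h2: "hom C h2 T X" and e: "k \<cdot> h1 = k \<cdot> h2"
    have "r2 \<cdot> (k \<cdot> h1) = r2 \<cdot> (k \<cdot> h2)" using e by simp
    then have "n \<cdot> h1 = n \<cdot> h2" using h1 h2 H1 by (simp add: cs L[OF rk2] hom_def)
    then show "h1 = h2" using mn' h1 h2 by blast
  qed
  obtain \<delta> where h\<delta>: "hom C \<delta> Y R" and d1: "r1 \<cdot> \<delta> = Id C Y" and d2: "r2 \<cdot> \<delta> = Id C Y"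
    using ERD(4)[OF hom_id[OF YO]] H0 by (auto simp: cs)
  have "split_epi C r1" unfolding split_epi_def using h\<delta> d1 H0 by (auto simp: hom_def)
  then have "protosplit_mono C k" unfolding protosplit_mono_def using kerK by blast
  moreover have "Dom C k = X" using hk unfolding hom_def by simp
  ultimately have "split_mono C k" using pcX unfolding proto_complete_def by blast
  then obtain \<rho> where h\<rho>: "hom C \<rho> R X" and \<rho>k: "\<rho> \<cdot> k = Id C X"
    unfolding split_mono_def using hk unfolding hom_def by auto
  note H2 = H1 h\<delta>[unfolded hom_def] h\<rho>[unfolded hom_def]
  have dU: "\<And>T d a. hom C d T R \<Longrightarrow> hom C a T Y \<Longrightarrow> r1 \<cdot> d = a \<Longrightarrow> r2 \<cdot> d = a \<Longrightarrow> d = \<delta> \<cdot> a"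
  proof -
    fix T d a assume d: "hom C d T R" and a: "hom C a T Y" and e1: "r1 \<cdot> d = a" and e2: "r2 \<cdot> d = a"
    show "d = \<delta> \<cdot> a"
      by (rule JM[OF d hom_comp[OF a h\<delta>]]) (use a e1 e2 H2 in \<open>simp_all add: cs L[OF d1] L[OF d2] hom_def\<close>)
  qed
  define \<alpha> where "\<alpha> = f \<cdot> \<rho>"
  define \<beta> where "\<beta> = f \<cdot> (\<rho> \<cdot> (\<delta> \<cdot> r1))"
  have h\<alpha>: "hom C \<alpha> R B" unfolding \<alpha>_def using H2 by (simp add: cs hom_def)
  have h\<beta>: "hom C \<beta> R B" unfolding \<beta>_def using H2 by (simp add: cs hom_def)
  obtain Q e where he: "hom C e Q R" and eab: "\<alpha> \<cdot> e = \<beta> \<cdot> e"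
    and F0: "\<forall>T x. hom C x T R \<and> \<alpha> \<cdot> x = \<beta> \<cdot> x \<longrightarrow> (\<exists>h. hom C h T Q \<and> e \<cdot> h = x)"
    and M0: "\<forall>T h1 h2. hom C h1 T Q \<and> hom C h2 T Q \<and> e \<cdot> h1 = e \<cdot> h2 \<longrightarrow> h1 = h2"
    using eq_exists[OF h\<alpha> h\<beta>] by blast
  note H3 = H2 he[unfolded hom_def]
  have QO: "Q \<in> Obj C" using hom_objs he by auto
  have F: "\<And>T z. hom C z T R \<Longrightarrow> f \<cdot> (\<rho> \<cdot> z) = f \<cdot> (\<rho> \<cdot> (\<delta> \<cdot> (r1 \<cdot> z))) \<Longrightarrow> \<exists>h. hom C h T Q \<and> e \<cdot> h = z"
  proof -
    fix T z assume z: "hom C z T R" and eq: "f \<cdot> (\<rho> \<cdot> z) = f \<cdot> (\<rho> \<cdot> (\<delta> \<cdot> (r1 \<cdot> z)))"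
    have "\<alpha> \<cdot> z = \<beta> \<cdot> z" unfolding \<alpha>_def \<beta>_def using z H3 eq by (simp add: cs hom_def)
    then show "\<exists>h. hom C h T Q \<and> e \<cdot> h = z" using F0 z by blast
  qed
  have G: "\<And>T h. hom C h T Q \<Longrightarrow> f \<cdot> (\<rho> \<cdot> (e \<cdot> h)) = f \<cdot> (\<rho> \<cdot> (\<delta> \<cdot> (r1 \<cdot> (e \<cdot> h))))"
  proof -
    fix T h assume h: "hom C h T Q"
    have "(\<alpha> \<cdot> e) \<cdot> h = (\<beta> \<cdot> e) \<cdot> h" using eab by simp
    then show "f \<cdot> (\<rho> \<cdot> (e \<cdot> h)) = f \<cdot> (\<rho> \<cdot> (\<delta> \<cdot> (r1 \<cdot> (e \<cdot> h))))"
      unfolding \<alpha>_def \<beta>_def using h H3 by (simp add: cs hom_def)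
  qed
  have G1: "f \<cdot> (\<rho> \<cdot> e) = f \<cdot> (\<rho> \<cdot> (\<delta> \<cdot> (r1 \<cdot> e)))"
    using G[OF hom_id[OF QO]] H3 QO by (simp add: cs)
  have M: "\<And>T h1 h2. hom C h1 T Q \<Longrightarrow> hom C h2 T Q \<Longrightarrow> e \<cdot> h1 = e \<cdot> h2 \<Longrightarrow> h1 = h2"
    using M0 by blast
  define r1q where "r1q = r1 \<cdot> e"
  define r2q where "r2q = r2 \<cdot> e"
  have hr1q: "hom C r1q Q Y" and hr2q: "hom C r2q Q Y" unfolding r1q_def r2q_def using H3 by (simp_all add: cs hom_def)
  have "f \<cdot> (\<rho> \<cdot> (k \<cdot> u)) = f \<cdot> (\<rho> \<cdot> (\<delta> \<cdot> (r1 \<cdot> (k \<cdot> u))))"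
    using H3 by (simp add: cs L[OF \<rho>k] \<rho>k L[OF rk1] rk1 fu)
  then obtain k2 where hk2: "hom C k2 S Q" and ek2: "e \<cdot> k2 = k \<cdot> u"
    using F[of "k \<cdot> u" S] hom_comp[OF hu hk] by blast
  have "f \<cdot> (\<rho> \<cdot> \<delta>) = f \<cdot> (\<rho> \<cdot> (\<delta> \<cdot> (r1 \<cdot> \<delta>)))"
    using H3 by (simp add: cs d1)
  then obtain dq where hdq: "hom C dq Y Q" and edq: "e \<cdot> dq = \<delta>"
    using F[OF h\<delta>] by blast
  note H4 = H3 hk2[unfolded hom_def] hdq[unfolded hom_def] QO
  have r1qdq: "r1q \<cdot> dq = Id C Y" unfolding r1q_def using H4 by (simp add: cs L[OF edq] edq d1)
  have rk2z: "r1q \<cdot> k2 = zero S Y" unfolding r1q_def using H4 by (simp add: cs L[OF ek2] ek2 L[OF rk1] rk1)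
  have monoK2: "\<And>T h1 h2. hom C h1 T S \<Longrightarrow> hom C h2 T S \<Longrightarrow> k2 \<cdot> h1 = k2 \<cdot> h2 \<Longrightarrow> h1 = h2"
  proof -
    fix T h1 h2 assume h1: "hom C h1 T S" and h2: "hom C h2 T S" and eq: "k2 \<cdot> h1 = k2 \<cdot> h2"
    have "r2 \<cdot> (e \<cdot> (k2 \<cdot> h1)) = r2 \<cdot> (e \<cdot> (k2 \<cdot> h2))" using eq by simp
    then have "n \<cdot> (u \<cdot> h1) = n \<cdot> (u \<cdot> h2)" using h1 h2 H4 by (simp add: cs L[OF ek2] ek2 L[OF rk2] rk2 hom_def)
    then have "u \<cdot> h1 = u \<cdot> h2" using mn' hom_comp[OF h1 hu] hom_comp[OF h2 hu] by blast
    then show "h1 = h2" using mu h1 h2 by blast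
  qed
  have kerK2: "is_kernel C k2 r1q"
  proof (rule kerI[OF hk2 hr1q rk2z])
    fix T x assume x: "hom C x T Q" and z: "r1q \<cdot> x = zero T Y"
    have TO: "T \<in> Obj C" using hom_objs x by auto
    have ex: "hom C (e \<cdot> x) T R" using hom_comp[OF x he] .
    have CR: "Cod C r1 = Y" "Dom C k = X" using H4 by simp_all
    have "r1 \<cdot> (e \<cdot> x) = zero T (Cod C r1)" using z H4 x unfolding r1q_def by (simp add: cs hom_def)
    then have "\<exists>h. hom C h T (Dom C k) \<and> k \<cdot> h = e \<cdot> x" using kerD(4)[OF kerK, of "e \<cdot> x" T] ex DD(1) by simp
    then obtain h where h: "hom C h T X" "k \<cdot> h = e \<cdot> x" using CR by auto
    have "f \<cdot> (\<rho> \<cdot> (e \<cdot> x)) = f \<cdot> (\<rho> \<cdot> (\<delta> \<cdot> (r1 \<cdot> (e \<cdot> x))))" using G[OF x] .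
    then have "f \<cdot> h = zero T B" using h(2)[symmetric] h(1) H4 TO by (simp add: cs L[OF \<rho>k] \<rho>k L[OF rk1] rk1 hom_def)
    then obtain s where s: "hom C s T S" "u \<cdot> s = h" using UK(4)[of h T] h(1) fX S_def B_def by auto
    have "e \<cdot> (k2 \<cdot> s) = e \<cdot> x" using s h H4 by (simp add: cs L[OF ek2] ek2 hom_def)
    then have "k2 \<cdot> s = x" using M hom_comp[OF s(1) hk2] x by blast
    then show "\<exists>h. hom C h T S \<and> k2 \<cdot> h = x" using s by blast
  qed (rule monoK2)
  have JEQ: "\<And>W a b. hom C a Q W \<Longrightarrow> hom C b Q W \<Longrightarrow> a \<cdot> k2 = b \<cdot> k2 \<Longrightarrow> a \<cdot> dq = b \<cdot> dq \<Longrightarrow> a = b"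
    by (rule jointly_epic[OF kerK2 hr1q hdq r1qdq])
  obtain P2 q1 q2 where Pr2: "is_product C P2 q1 q2 S S" using prod_exists[OF SO SO] by blast
  note PD2 = prodD[OF Pr2]
  have P2O: "P2 \<in> Obj C" using hom_objs PD2(1) by auto
  obtain uu where huu: "hom C uu P2 P" and uu1: "p1 \<cdot> uu = u \<cdot> q1" and uu2: "p2 \<cdot> uu = u \<cdot> q2"
    using PD(3)[OF hom_comp[OF PD2(1) hu] hom_comp[OF PD2(2) hu]] by blast
  obtain j01 where hj01: "hom C j01 S P2" and j01a: "q1 \<cdot> j01 = zero S S" and j01b: "q2 \<cdot> j01 = Id C S"
    using PD2(3)[OF zero_hom[OF SO SO] hom_id[OF SO]] by blast
  obtain j10 where hj10: "hom C j10 S P2" and j10a: "q1 \<cdot> j10 = Id C S" and j10b: "q2 \<cdot> j10 = zero S S"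
    using PD2(3)[OF hom_id[OF SO] zero_hom[OF SO SO]] by blast
  obtain j11 where hj11: "hom C j11 S P2" and j11a: "q1 \<cdot> j11 = Id C S" and j11b: "q2 \<cdot> j11 = Id C S"
    using PD2(3)[OF hom_id[OF SO] hom_id[OF SO]] by blast
  note H5 = H4 PD2(1)[unfolded hom_def] PD2(2)[unfolded hom_def] P2O huu[unfolded hom_def]
    hj01[unfolded hom_def] hj10[unfolded hom_def] hj11[unfolded hom_def]
  have kj: "is_kernel C j01 q1" by (rule prod_kernel[OF Pr2 hj01 j01a j01b])
  have uuj01: "uu \<cdot> j01 = e01 \<cdot> u"
  proof (rule PD(4))
    show "hom C (uu \<cdot> j01) S P" "hom C (e01 \<cdot> u) S P" using hom_comp hj01 huu hu he01 by blast+
    show "p1 \<cdot> (uu \<cdot> j01) = p1 \<cdot> (e01 \<cdot> u)" using H5 by (simp add: cs L[OF uu1] uu1 L[OF e01a] e01a j01a)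
    show "p2 \<cdot> (uu \<cdot> j01) = p2 \<cdot> (e01 \<cdot> u)" using H5 by (simp add: cs L[OF uu2] uu2 L[OF e01b] e01b j01b)
  qed
  have mtuu11: "mt \<cdot> (uu \<cdot> j11) = \<delta> \<cdot> (n \<cdot> u)"
  proof (rule JM)
    show "hom C (mt \<cdot> (uu \<cdot> j11)) S R" "hom C (\<delta> \<cdot> (n \<cdot> u)) S R" using H5 by (simp_all add: cs hom_def)
    show "r1 \<cdot> (mt \<cdot> (uu \<cdot> j11)) = r1 \<cdot> (\<delta> \<cdot> (n \<cdot> u))"
      using H5 by (simp add: cs L[OF c1] c1 L[OF uu1] uu1 j11a L[OF d1] d1)
    show "r2 \<cdot> (mt \<cdot> (uu \<cdot> j11)) = r2 \<cdot> (\<delta> \<cdot> (n \<cdot> u))"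
      using H5 by (simp add: cs L[OF c2] c2 L[OF uu2] uu2 j11b L[OF d2] d2)
  qed
  have "f \<cdot> (\<rho> \<cdot> (mt \<cdot> uu)) = f \<cdot> (\<rho> \<cdot> (\<delta> \<cdot> (r1 \<cdot> (mt \<cdot> uu))))"
  proof (rule jointly_epic[OF kj PD2(1) hj11 j11a])
    show "hom C (f \<cdot> (\<rho> \<cdot> (mt \<cdot> uu))) P2 B" "hom C (f \<cdot> (\<rho> \<cdot> (\<delta> \<cdot> (r1 \<cdot> (mt \<cdot> uu))))) P2 B"
      using H5 by (simp_all add: cs hom_def)
    have a: "f \<cdot> (\<rho> \<cdot> (mt \<cdot> uu)) \<cdot> j01 = zero S B"
      using H5 by (simp add: cs L[OF uuj01] uuj01 L[OF k_def[symmetric]] L[OF \<rho>k] \<rho>k fu)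
    have b: "f \<cdot> (\<rho> \<cdot> (\<delta> \<cdot> (r1 \<cdot> (mt \<cdot> uu)))) \<cdot> j01 = zero S B"
      using H5 by (simp add: cs L[OF c1] c1 L[OF uu1] uu1 j01a)
    show "(f \<cdot> (\<rho> \<cdot> (mt \<cdot> uu))) \<cdot> j01 = (f \<cdot> (\<rho> \<cdot> (\<delta> \<cdot> (r1 \<cdot> (mt \<cdot> uu))))) \<cdot> j01"
      using a b H5 by (simp add: cs)
    show "(f \<cdot> (\<rho> \<cdot> (mt \<cdot> uu))) \<cdot> j11 = (f \<cdot> (\<rho> \<cdot> (\<delta> \<cdot> (r1 \<cdot> (mt \<cdot> uu))))) \<cdot> j11"
      using H5 by (simp add: cs L[OF mtuu11] mtuu11 L[OF c1] c1 L[OF uu1] uu1 j11a L[OF d1] d1)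
  qed
  then obtain mt2 where hmt2: "hom C mt2 P2 Q" and emt2: "e \<cdot> mt2 = mt \<cdot> uu"
    using F[of "mt \<cdot> uu" P2] hom_comp[OF huu hmt] by blast
  note H6 = H5 hmt2[unfolded hom_def]
  have c1q: "r1q \<cdot> mt2 = (n \<cdot> u) \<cdot> q1" unfolding r1q_def
    using H6 by (simp add: cs L[OF emt2] emt2 L[OF c1] c1 L[OF uu1] uu1)
  have c2q: "r2q \<cdot> mt2 = (n \<cdot> u) \<cdot> q2" unfolding r2q_def
    using H6 by (simp add: cs L[OF emt2] emt2 L[OF c2] c2 L[OF uu2] uu2)
  have JMQ: "\<And>T x y. hom C x T Q \<Longrightarrow> hom C y T Q \<Longrightarrow> r1q \<cdot> x = r1q \<cdot> y \<Longrightarrow> r2q \<cdot> x = r2q \<cdot> y \<Longrightarrow> x = y"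
  proof -
    fix T x y assume x: "hom C x T Q" and y: "hom C y T Q" and e1: "r1q \<cdot> x = r1q \<cdot> y" and e2: "r2q \<cdot> x = r2q \<cdot> y"
    have "e \<cdot> x = e \<cdot> y"
    proof (rule JM)
      show "hom C (e \<cdot> x) T R" "hom C (e \<cdot> y) T R" using x y he hom_comp by blast+
      show "r1 \<cdot> (e \<cdot> x) = r1 \<cdot> (e \<cdot> y)" using e1 x y H6 unfolding r1q_def by (simp add: cs hom_def)
      show "r2 \<cdot> (e \<cdot> x) = r2 \<cdot> (e \<cdot> y)" using e2 x y H6 unfolding r2q_def by (simp add: cs hom_def)
    qed
    then show "x = y" using M x y by blast
  qed
  have REFQ: "\<And>T a. hom C a T Y \<Longrightarrow> \<exists>d. hom C d T Q \<and> r1q \<cdot> d = a \<and> r2q \<cdot> d = a"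
  proof -
    fix T a assume a: "hom C a T Y"
    have "e \<cdot> (dq \<cdot> a) = \<delta> \<cdot> a" using a H6 by (simp add: cs L[OF edq] hom_def)
    moreover have "r1q \<cdot> (dq \<cdot> a) = a" "r2q \<cdot> (dq \<cdot> a) = a" unfolding r1q_def r2q_def
      using a H6 by (simp_all add: cs L[OF edq] edq L[OF d1] d1 L[OF d2] d2 hom_def)
    ultimately show "\<exists>d. hom C d T Q \<and> r1q \<cdot> d = a \<and> r2q \<cdot> d = a" using hom_comp[OF a hdq] by blast
  qed
  obtain \<sigma> where h\<sigma>: "hom C \<sigma> R R" and s1: "r1 \<cdot> \<sigma> = r2 \<cdot> Id C R" and s2: "r2 \<cdot> \<sigma> = r1 \<cdot> Id C R"
    using ERD(5)[OF hom_id[OF RO]] by blast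
  have s1': "r1 \<cdot> \<sigma> = r2" and s2': "r2 \<cdot> \<sigma> = r1" using s1 s2 H6 by (simp_all add: cs)
  note H7 = H6 h\<sigma>[unfolded hom_def]
  have \<sigma>\<delta>: "\<sigma> \<cdot> \<delta> = \<delta>"
  proof -
    have "\<sigma> \<cdot> \<delta> = \<delta> \<cdot> Id C Y"
      by (rule dU) (use H7 in \<open>simp_all add: cs L[OF s1'] s1' L[OF s2'] s2' d1 d2 hom_def\<close>)
    then show ?thesis using H7 by (simp add: cs)
  qed
  have \<sigma>ku: "\<sigma> \<cdot> (k \<cdot> u) = e \<cdot> (mt2 \<cdot> j10)"
  proof (rule JM)
    show "hom C (\<sigma> \<cdot> (k \<cdot> u)) S R" "hom C (e \<cdot> (mt2 \<cdot> j10)) S R" using H7 by (simp_all add: cs hom_def)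
    have "r1 \<cdot> (e \<cdot> (mt2 \<cdot> j10)) = (r1q \<cdot> mt2) \<cdot> j10" unfolding r1q_def using H7 by (simp add: cs)
    then show "r1 \<cdot> (\<sigma> \<cdot> (k \<cdot> u)) = r1 \<cdot> (e \<cdot> (mt2 \<cdot> j10))" unfolding c1q
      using H7 by (simp add: cs L[OF s1'] s1' L[OF rk2] rk2 j10a)
    have "r2 \<cdot> (e \<cdot> (mt2 \<cdot> j10)) = (r2q \<cdot> mt2) \<cdot> j10" unfolding r2q_def using H7 by (simp add: cs)
    then show "r2 \<cdot> (\<sigma> \<cdot> (k \<cdot> u)) = r2 \<cdot> (e \<cdot> (mt2 \<cdot> j10))" unfolding c2q
      using H7 by (simp add: cs L[OF s2'] s2' L[OF rk1] rk1 j10b)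
  qed
  have symU: "f \<cdot> (\<rho> \<cdot> (\<sigma> \<cdot> e)) = f \<cdot> (\<rho> \<cdot> (\<delta> \<cdot> (r1 \<cdot> (\<sigma> \<cdot> e))))"
  proof (rule JEQ)
    show "hom C (f \<cdot> (\<rho> \<cdot> (\<sigma> \<cdot> e))) Q B" "hom C (f \<cdot> (\<rho> \<cdot> (\<delta> \<cdot> (r1 \<cdot> (\<sigma> \<cdot> e))))) Q B"
      using H7 by (simp_all add: cs hom_def)
    have a: "(f \<cdot> (\<rho> \<cdot> (\<sigma> \<cdot> e))) \<cdot> k2 = f \<cdot> (\<rho> \<cdot> (e \<cdot> (mt2 \<cdot> j10)))"
      using H7 by (simp add: cs L[OF ek2] ek2 \<sigma>ku)
    have b: "f \<cdot> (\<rho> \<cdot> (e \<cdot> (mt2 \<cdot> j10))) = f \<cdot> (\<rho> \<cdot> (\<delta> \<cdot> (r1 \<cdot> (e \<cdot> (mt2 \<cdot> j10)))))"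
      using G[of "mt2 \<cdot> j10" S] H7 by (simp add: hom_def cs)
    have c: "r1 \<cdot> (e \<cdot> (mt2 \<cdot> j10)) = n \<cdot> u"
    proof -
      have "r1 \<cdot> (e \<cdot> (mt2 \<cdot> j10)) = (r1q \<cdot> mt2) \<cdot> j10" unfolding r1q_def using H7 by (simp add: cs)
      then show ?thesis unfolding c1q using H7 by (simp add: cs j10a)
    qed
    have d: "(f \<cdot> (\<rho> \<cdot> (\<delta> \<cdot> (r1 \<cdot> (\<sigma> \<cdot> e))))) \<cdot> k2 = f \<cdot> (\<rho> \<cdot> (\<delta> \<cdot> (n \<cdot> u)))"
      using H7 by (simp add: cs L[OF s1'] s1' L[OF ek2] ek2 L[OF rk2] rk2)
    show "(f \<cdot> (\<rho> \<cdot> (\<sigma> \<cdot> e))) \<cdot> k2 = (f \<cdot> (\<rho> \<cdot> (\<delta> \<cdot> (r1 \<cdot> (\<sigma> \<cdot> e))))) \<cdot> k2"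
      using a b c d by simp
    show "(f \<cdot> (\<rho> \<cdot> (\<sigma> \<cdot> e))) \<cdot> dq = (f \<cdot> (\<rho> \<cdot> (\<delta> \<cdot> (r1 \<cdot> (\<sigma> \<cdot> e))))) \<cdot> dq"
      using H7 by (simp add: cs L[OF edq] edq L[OF \<sigma>\<delta>] \<sigma>\<delta> L[OF d1] d1)
  qed
  have SYMQ: "\<And>T x. hom C x T Q \<Longrightarrow> \<exists>y. hom C y T Q \<and> r1q \<cdot> y = r2q \<cdot> x \<and> r2q \<cdot> y = r1q \<cdot> x"
  proof -
    fix T x assume x: "hom C x T Q"
    have "f \<cdot> (\<rho> \<cdot> (\<sigma> \<cdot> (e \<cdot> x))) = f \<cdot> (\<rho> \<cdot> (\<delta> \<cdot> (r1 \<cdot> (\<sigma> \<cdot> (e \<cdot> x)))))"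
    proof -
      have "(f \<cdot> (\<rho> \<cdot> (\<sigma> \<cdot> e))) \<cdot> x = (f \<cdot> (\<rho> \<cdot> (\<delta> \<cdot> (r1 \<cdot> (\<sigma> \<cdot> e))))) \<cdot> x" using symU by simp
      then show ?thesis using x H7 by (simp add: cs hom_def)
    qed
    then obtain y where y: "hom C y T Q" "e \<cdot> y = \<sigma> \<cdot> (e \<cdot> x)"
      using F[of "\<sigma> \<cdot> (e \<cdot> x)" T] x H7 by (auto simp: cs hom_def)
    have "r1q \<cdot> y = r2q \<cdot> x" "r2q \<cdot> y = r1q \<cdot> x" unfolding r1q_def r2q_def
      using x y H7 by (simp_all add: cs L[OF s1'] s1' L[OF s2'] s2' hom_def y(2))
    then show "\<exists>y. hom C y T Q \<and> r1q \<cdot> y = r2q \<cdot> x \<and> r2q \<cdot> y = r1q \<cdot> x" using y by blast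
  qed
  obtain W w1 w2 where hw1: "hom C w1 W Q" and hw2: "hom C w2 W Q" and cw: "r2q \<cdot> w1 = r1q \<cdot> w2"
    and UW: "\<forall>T a b. hom C a T Q \<and> hom C b T Q \<and> r2q \<cdot> a = r1q \<cdot> b \<longrightarrow> (\<exists>!h. hom C h T W \<and> w1 \<cdot> h = a \<and> w2 \<cdot> h = b)"
    using pb_exists[OF hr2q hr1q] by blast
  have WO: "W \<in> Obj C" using hom_objs hw1 by auto
  note H8 = H7 hw1[unfolded hom_def] hw2[unfolded hom_def] WO hr1q[unfolded hom_def] hr2q[unfolded hom_def]
  have WE: "\<And>T a b. hom C a T Q \<Longrightarrow> hom C b T Q \<Longrightarrow> r2q \<cdot> a = r1q \<cdot> b \<Longrightarrow> \<exists>h. hom C h T W \<and> w1 \<cdot> h = a \<and> w2 \<cdot> h = b"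
  proof -
    fix T a b assume "hom C a T Q" "hom C b T Q" "r2q \<cdot> a = r1q \<cdot> b"
    then have "\<exists>!h. hom C h T W \<and> w1 \<cdot> h = a \<and> w2 \<cdot> h = b" using UW by blast
    then show "\<exists>h. hom C h T W \<and> w1 \<cdot> h = a \<and> w2 \<cdot> h = b" by (rule ex1_implies_ex)
  qed
  have WU: "\<And>T h1 h2. hom C h1 T W \<Longrightarrow> hom C h2 T W \<Longrightarrow> w1 \<cdot> h1 = w1 \<cdot> h2 \<Longrightarrow> w2 \<cdot> h1 = w2 \<cdot> h2 \<Longrightarrow> h1 = h2"
  proof -
    fix T h1 h2 assume h1: "hom C h1 T W" and h2: "hom C h2 T W" and e1: "w1 \<cdot> h1 = w1 \<cdot> h2" and e2: "w2 \<cdot> h1 = w2 \<cdot> h2"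
    have "r2q \<cdot> (w1 \<cdot> h1) = r1q \<cdot> (w2 \<cdot> h1)" using h1 H8 by (simp add: cs L[OF cw] hom_def)
    then have "\<exists>!h. hom C h T W \<and> w1 \<cdot> h = w1 \<cdot> h1 \<and> w2 \<cdot> h = w2 \<cdot> h1"
      using UW hom_comp[OF h1 hw1] hom_comp[OF h1 hw2] by blast
    note u1 = this
    show "h1 = h2" by (rule ex1_eqI[OF u1]) (use h1 h2 e1 e2 in simp_all)
  qed
  obtain \<tau> where h\<tau>: "hom C \<tau> W R" and t1: "r1 \<cdot> \<tau> = r1 \<cdot> (e \<cdot> w1)" and t2: "r2 \<cdot> \<tau> = r2 \<cdot> (e \<cdot> w2)"
  proof -
    have "r2 \<cdot> (e \<cdot> w1) = r1 \<cdot> (e \<cdot> w2)" using cw H8 unfolding r1q_def r2q_def by (simp add: cs)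
    then show ?thesis using that ERD(6)[OF hom_comp[OF hw1 he] hom_comp[OF hw2 he]] by blast
  qed
  note H9 = H8 h\<tau>[unfolded hom_def]
  obtain sW where hsW: "hom C sW Q W" and sW1: "w1 \<cdot> sW = Id C Q" and sW2: "w2 \<cdot> sW = dq \<cdot> r2q"
  proof -
    have "r2q \<cdot> Id C Q = r1q \<cdot> (dq \<cdot> r2q)" using H9 r1qdq by (simp add: cs L[OF r1qdq])
    then show ?thesis using that WE[OF hom_id[OF QO] hom_comp[OF hr2q hdq]] by blast
  qed
  obtain kW where hkW: "hom C kW S W" and kW1: "w1 \<cdot> kW = zero S Q" and kW2: "w2 \<cdot> kW = k2"
  proof -
    have "r2q \<cdot> zero S Q = r1q \<cdot> k2" using H9 rk2z by (simp add: cs)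
    then show ?thesis using that WE[OF zero_hom[OF SO QO] hk2] by blast
  qed
  note H10 = H9 hsW[unfolded hom_def] hkW[unfolded hom_def]
  have kerW: "is_kernel C kW w1"
  proof (rule kerI[OF hkW hw1 kW1])
    fix T x assume x: "hom C x T W" and z: "w1 \<cdot> x = zero T Q"
    have TO: "T \<in> Obj C" using hom_objs x by auto
    have "r1q \<cdot> (w2 \<cdot> x) = zero T Y"
    proof -
      have "r2q \<cdot> (w1 \<cdot> x) = r1q \<cdot> (w2 \<cdot> x)" using x H10 by (simp add: cs L[OF cw] hom_def)
      then have "r1q \<cdot> (w2 \<cdot> x) = r2q \<cdot> (w1 \<cdot> x)" by simp
      then show ?thesis using z H10 TO by (simp add: cs)
    qed
    then have "\<exists>h. hom C h T (Dom C k2) \<and> k2 \<cdot> h = w2 \<cdot> x"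
      using kerD(4)[OF kerK2, of "w2 \<cdot> x" T] hom_comp[OF x hw2] H10 by simp
    then obtain s where s: "hom C s T S" "k2 \<cdot> s = w2 \<cdot> x" using H10 by auto
    have "kW \<cdot> s = x"
    proof (rule WU[OF _ x])
      show "hom C (kW \<cdot> s) T W" using hom_comp[OF s(1) hkW] .
      show "w1 \<cdot> (kW \<cdot> s) = w1 \<cdot> x" using z s H10 TO by (simp add: cs L[OF kW1] kW1 hom_def)
      show "w2 \<cdot> (kW \<cdot> s) = w2 \<cdot> x" using s H10 by (simp add: cs L[OF kW2] kW2 hom_def)
    qed
    then show "\<exists>h. hom C h T S \<and> kW \<cdot> h = x" using s by blast
  next
    fix T h1 h2 assume h1: "hom C h1 T S" and h2: "hom C h2 T S" and eq: "kW \<cdot> h1 = kW \<cdot> h2"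
    have "w2 \<cdot> (kW \<cdot> h1) = w2 \<cdot> (kW \<cdot> h2)" using eq by simp
    then have "k2 \<cdot> h1 = k2 \<cdot> h2" using h1 h2 H10 by (simp add: cs L[OF kW2] kW2 hom_def)
    then show "h1 = h2" using monoK2 h1 h2 by blast
  qed
  have \<tau>sW: "\<tau> \<cdot> sW = e"
  proof (rule JM)
    show "hom C (\<tau> \<cdot> sW) Q R" "hom C e Q R" using H10 by (simp_all add: cs hom_def)
    show "r1 \<cdot> (\<tau> \<cdot> sW) = r1 \<cdot> e" using H10 by (simp add: cs L[OF t1] t1 L[OF sW1] sW1)
    show "r2 \<cdot> (\<tau> \<cdot> sW) = r2 \<cdot> e" unfolding r2q_def
      using H10 by (simp add: cs L[OF t2] t2 L[OF sW2] sW2 L[OF edq] edq L[OF d2] d2 r2q_def)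
  qed
  have \<tau>kW: "\<tau> \<cdot> kW = k \<cdot> u"
  proof (rule JM)
    show "hom C (\<tau> \<cdot> kW) S R" "hom C (k \<cdot> u) S R" using H10 by (simp_all add: cs hom_def)
    show "r1 \<cdot> (\<tau> \<cdot> kW) = r1 \<cdot> (k \<cdot> u)" using H10 by (simp add: cs L[OF t1] t1 L[OF kW1] kW1 L[OF rk1] rk1)
    show "r2 \<cdot> (\<tau> \<cdot> kW) = r2 \<cdot> (k \<cdot> u)" using H10 by (simp add: cs L[OF t2] t2 L[OF kW2] kW2 L[OF ek2] ek2)
  qed
  have transU: "f \<cdot> (\<rho> \<cdot> \<tau>) = f \<cdot> (\<rho> \<cdot> (\<delta> \<cdot> (r1 \<cdot> \<tau>)))"
  proof (rule jointly_epic[OF kerW hw1 hsW sW1])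
    show "hom C (f \<cdot> (\<rho> \<cdot> \<tau>)) W B" "hom C (f \<cdot> (\<rho> \<cdot> (\<delta> \<cdot> (r1 \<cdot> \<tau>)))) W B"
      using H10 by (simp_all add: cs hom_def)
    show "(f \<cdot> (\<rho> \<cdot> \<tau>)) \<cdot> kW = (f \<cdot> (\<rho> \<cdot> (\<delta> \<cdot> (r1 \<cdot> \<tau>)))) \<cdot> kW"
      using H10 by (simp add: cs L[OF \<tau>kW] \<tau>kW L[OF \<rho>k] \<rho>k fu L[OF rk1] rk1)
    show "(f \<cdot> (\<rho> \<cdot> \<tau>)) \<cdot> sW = (f \<cdot> (\<rho> \<cdot> (\<delta> \<cdot> (r1 \<cdot> \<tau>)))) \<cdot> sW"
      using H10 G1 by (simp add: cs L[OF \<tau>sW] \<tau>sW)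
  qed
  have TRQ: "\<And>T x y. hom C x T Q \<Longrightarrow> hom C y T Q \<Longrightarrow> r2q \<cdot> x = r1q \<cdot> y \<Longrightarrow> \<exists>z. hom C z T Q \<and> r1q \<cdot> z = r1q \<cdot> x \<and> r2q \<cdot> z = r2q \<cdot> y"
  proof -
    fix T x y assume x: "hom C x T Q" and y: "hom C y T Q" and xy: "r2q \<cdot> x = r1q \<cdot> y"
    obtain h where h: "hom C h T W" "w1 \<cdot> h = x" "w2 \<cdot> h = y" using WE[OF x y xy] by blast
    have "f \<cdot> (\<rho> \<cdot> (\<tau> \<cdot> h)) = f \<cdot> (\<rho> \<cdot> (\<delta> \<cdot> (r1 \<cdot> (\<tau> \<cdot> h))))"
    proof -
      have "(f \<cdot> (\<rho> \<cdot> \<tau>)) \<cdot> h = (f \<cdot> (\<rho> \<cdot> (\<delta> \<cdot> (r1 \<cdot> \<tau>)))) \<cdot> h" using transU by simp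
      then show ?thesis using h H10 by (simp add: cs hom_def)
    qed
    then obtain z where z: "hom C z T Q" "e \<cdot> z = \<tau> \<cdot> h" using F[of "\<tau> \<cdot> h" T] hom_comp[OF h(1) h\<tau>] by blast
    have "r1q \<cdot> z = r1q \<cdot> x" "r2q \<cdot> z = r2q \<cdot> y" unfolding r1q_def r2q_def
      using z h H10 x y by (simp_all add: cs z(2) L[OF t1] t1 L[OF t2] t2 hom_def flip: h(2) h(3))
    then show "\<exists>z. hom C z T Q \<and> r1q \<cdot> z = r1q \<cdot> x \<and> r2q \<cdot> z = r2q \<cdot> y" using z by blast
  qed
  have ERQ: "equivalence_relation C Q r1q r2q Y"
    by (rule erI[OF hr1q hr2q JMQ REFQ SYMQ TRQ])
  have hnu: "hom C (n \<cdot> u) S Y" using hom_comp[OF hu hn] .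
  have PBQ: "is_pullback C r1q (n \<cdot> u) mt2 q1"
  proof (rule pbI[OF hr1q hnu hmt2 PD2(1) c1q])
    fix T a b assume a: "hom C a T Q" and b: "hom C b T S" and ab: "r1q \<cdot> a = (n \<cdot> u) \<cdot> b"
    have TO: "T \<in> Obj C" using hom_objs a by auto
    define c where "c = mt2 \<cdot> (j10 \<cdot> b)"
    have hc: "hom C c T Q" unfolding c_def using b hj10 hmt2 hom_comp by blast
    have rc1: "r1q \<cdot> c = n \<cdot> (u \<cdot> b)" unfolding c_def using b H10 TO by (simp add: cs L[OF c1q] L[OF j10a] j10a hom_def)
    have rc2: "r2q \<cdot> c = zero T Y" unfolding c_def using b H10 TO by (simp add: cs L[OF c2q] L[OF j10b] j10b hom_def)
    obtain c' where hc': "hom C c' T Q" and c'1: "r1q \<cdot> c' = r2q \<cdot> c" and c'2: "r2q \<cdot> c' = r1q \<cdot> c"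
      using SYMQ[OF hc] by blast
    have "r2q \<cdot> c' = r1q \<cdot> a" using c'2 rc1 ab b H10 TO by (simp add: cs hom_def)
    then obtain w where hw: "hom C w T Q" and w1': "r1q \<cdot> w = r1q \<cdot> c'" and w2': "r2q \<cdot> w = r2q \<cdot> a"
      using TRQ[OF hc' a] by blast
    have "r1q \<cdot> w = zero T (Cod C r1q)" using w1' c'1 rc2 H10 TO by simp
    then have "\<exists>h. hom C h T (Dom C k2) \<and> k2 \<cdot> h = w"
      using kerD(4)[OF kerK2, of w T] hw H10 TO by simp
    then obtain s where s: "hom C s T S" "k2 \<cdot> s = w" using H10 TO by auto
    have "r2q \<cdot> w = n \<cdot> (u \<cdot> s)" unfolding r2q_def
      using s H10 TO by (simp add: cs L[OF ek2] ek2 L[OF rk2] rk2 hom_def flip: s(2))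
    then have ra2: "r2q \<cdot> a = n \<cdot> (u \<cdot> s)" using w2' by simp
    obtain h where h: "hom C h T P2" "q1 \<cdot> h = b" "q2 \<cdot> h = s" using PD2(3)[OF b s(1)] by blast
    have "mt2 \<cdot> h = a"
    proof (rule JMQ[OF hom_comp[OF h(1) hmt2] a])
      show "r1q \<cdot> (mt2 \<cdot> h) = r1q \<cdot> a" using ab b h H10 TO by (simp add: cs L[OF c1q] hom_def)
      show "r2q \<cdot> (mt2 \<cdot> h) = r2q \<cdot> a" using ra2 h H10 TO by (simp add: cs L[OF c2q] hom_def)
    qed
    then show "\<exists>h. hom C h T P2 \<and> mt2 \<cdot> h = a \<and> q1 \<cdot> h = b" using h by blast
  next
    fix T h1 h2 assume h1: "hom C h1 T P2" and h2: "hom C h2 T P2" and e1: "mt2 \<cdot> h1 = mt2 \<cdot> h2" and e2: "q1 \<cdot> h1 = q1 \<cdot> h2"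
    have "r2q \<cdot> (mt2 \<cdot> h1) = r2q \<cdot> (mt2 \<cdot> h2)" using e1 by simp
    then have "n \<cdot> (u \<cdot> (q2 \<cdot> h1)) = n \<cdot> (u \<cdot> (q2 \<cdot> h2))" using h1 h2 H10 by (simp add: cs L[OF c2q] hom_def)
    then have "u \<cdot> (q2 \<cdot> h1) = u \<cdot> (q2 \<cdot> h2)"
      using mn' hom_comp[OF hom_comp[OF h1 PD2(2)] hu] hom_comp[OF hom_comp[OF h2 PD2(2)] hu] by blast
    then have "q2 \<cdot> h1 = q2 \<cdot> h2" using mu hom_comp[OF h1 PD2(2)] hom_comp[OF h2 PD2(2)] by blast
    then show "h1 = h2" using PD2(4)[OF h1 h2 e2] by blast
  qed
  have mnu: "mono C (n \<cdot> u)"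
  proof (rule mono_I[OF hnu])
    fix T h1 h2 assume h1: "hom C h1 T S" and h2: "hom C h2 T S" and eq: "(n \<cdot> u) \<cdot> h1 = (n \<cdot> u) \<cdot> h2"
    have "n \<cdot> (u \<cdot> h1) = n \<cdot> (u \<cdot> h2)" using eq assoc[OF h1 hu hn] assoc[OF h2 hu hn] by simp
    then have "u \<cdot> h1 = u \<cdot> h2" using mn' hom_comp[OF h1 hu] hom_comp[OF h2 hu] by blast
    then show "h1 = h2" using mu h1 h2 by blast
  qed
  have DC: "Cod C (n \<cdot> u) = Y" "Dom C (n \<cdot> u) = S" using hnu unfolding hom_def by auto
  show ?thesis unfolding bourn_normal_def DC
    using mnu ERQ Pr2 hmt2 c1q c2q PBQ by blast
qed

end

theorem proposition5p4:
  fixes C :: "('o, 'a) category" and u :: 'a and X :: 'o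
  assumes "is_category C"
    and "pointed C"
    and "has_finite_limits C"
    and "protomodular C"
    and "proto_complete C X"
    and "normal_mono C u"
    and "Cod C u = X"
  shows "characteristic_mono C u"
proof -
  interpret pcat C using assms(1-4) by unfold_locales
  obtain f where uk: "is_kernel C u f" using assms(6) unfolding normal_mono_def by blast
  note UK = kerD[OF uk]
  have cu: "Cod C u = Dom C f" using uk unfolding is_kernel_def by (elim conjE)
  have hu: "hom C u (Dom C u) (Cod C u)" using UK(1) cu by simp
  have mu: "mono C u" by (rule mono_I[OF hu]) (rule UK(5))
  show ?thesis unfolding characteristic_mono_def
  proof (intro conjI allI impI)
    show "mono C u" by (rule mu)
    fix n assume "bourn_normal C n \<and> Dom C n = Cod C u"
    then show "bourn_normal C (Comp C n u)" using main[OF assms(5) uk assms(7)] assms(7) by blast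
  qed
qed

end
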